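(* Let $(a_m)_{m\ge0}$ be defined by $a_0=a_1=1$ and $a_{m+1}=-1+\sum_{p=0}^{m}a_pa_{m-p}$ for $m\ge1$ (OEIS A176677). For any $x,y\in\{0,1\}$, the tree pattern $(P,e)=(12435,10xy)$ satisfies $|\mathcal{T}_n(P,e)|=a_{n+1}$ for all $n\ge0$; i.e., the class $\mathcal{T}_n(12435,10\text{-}\text{-})$ is counted by OEIS A176677.
   Context: $\mathcal{T}_n$ is the set of binary trees on $n$ vertices labeled $1,\dots,n$ by the search tree property; $\mathcal{T}_0=\{\varepsilon\}$. $c_L,c_R,p$: left child, right child, parent. A tree pattern is $(P,e)$, $P\in\mathcal{T}_k$, $e\colon[k]\setminus\{\text{root}\}\to\{0,1\}$ ($e(i)=1$: edge to parent contiguous; $0$: non-contiguous). $T\in\mathcal{T}_n$ contains $(P,e)$ if there is an injection $f\colon[k]\to[n]$ such that for every non-root $i$ of $P$: if $e(i)=1$, $f(i)$ is the left (resp. right) child of $f(p(i))$ when $i$ is the left (resp. right) child of $p(i)$; if $e(i)=0$, $f(i)$ lies in the left (resp. right) subtree of $f(p(i))$. $\mathcal{T}_n(P,e)$ is the set of avoiders. Compact notation: $(\tau_1\cdots\tau_k,\,x_2\cdots x_k)$ denotes the pattern whose preorder vertex sequence (root, then left subtree recursively, then right subtree recursively) is $\tau_1,\dots,\tau_k$ and with $e(\tau_j)=x_j$; thus $(12435,10xy)$ is the tree with root 1, right child 2 of 1, right child 4 of 2, left child 3 and right child 5 of 4, with $e(2)=1$, $e(4)=0$, $e(3)=x$,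 $e(5)=y$. *)

theory Defs
  imports Main "HOL-Library.Tree"
begin

definition BT :: "nat \<Rightarrow> nat tree set" where
  "BT n = {T. inorder T = [1..<n+1]}"

definition lchild :: "nat tree \<Rightarrow> nat \<Rightarrow> nat \<Rightarrow> bool" where
  "lchild T v w \<longleftrightarrow> (\<exists>l r. Node l v r \<in> subtrees T \<and> l \<noteq> Leaf \<and> value l = w)"
definition rchild :: "nat tree \<Rightarrow> nat \<Rightarrow> nat \<Rightarrow> bool" where
  "rchild T v w \<longleftrightarrow> (\<exists>l r. Node l v r \<in> subtrees T \<and> r \<noteq> Leaf \<and> value r = w)"

definition in_lsub :: "nat tree \<Rightarrow> nat \<Rightarrow> nat \<Rightarrow> bool" where
  "in_lsub T v w \<longleftrightarrow> (\<exists>l r. Node l v r \<in> subtrees T \<and> w \<in> set_tree l)"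
definition in_rsub :: "nat tree \<Rightarrow> nat \<Rightarrow> nat \<Rightarrow> bool" where
  "in_rsub T v w \<longleftrightarrow> (\<exists>l r. Node l v r \<in> subtrees T \<and> w \<in> set_tree r)"

text \<open>T contains the tree pattern (P,e); e i = True means the edge from i to its
  parent is contiguous (value 1), False means non-contiguous (value 0).\<close>
definition contains :: "nat tree \<Rightarrow> nat tree \<Rightarrow> (nat \<Rightarrow> bool) \<Rightarrow> bool" where
  "contains T P e \<longleftrightarrow> (\<exists>f. inj_on f (set_tree P) \<and> f ` set_tree P \<subseteq> set_tree T \<and>
     (\<forall>v i. lchild P v i \<longrightarrow>
        (if e i then lchild T (f v) (f i) else in_lsub T (f v) (f i))) \<and>
     (\<forall>v i. rchild P v i \<longrightarrow>
        (if e i then rchild T (f v) (f i) else in_rsub T (f v) (f i))))"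

definition avoiders :: "nat \<Rightarrow> nat tree \<Rightarrow> (nat \<Rightarrow> bool) \<Rightarrow> nat tree set" where
  "avoiders n P e = {T \<in> BT n. \<not> contains T P e}"

definition P12435 :: "nat tree" where
  "P12435 = Node Leaf 1 (Node Leaf 2 (Node (Node Leaf 3 Leaf) 4 (Node Leaf 5 Leaf)))"

definition e10xy :: "bool \<Rightarrow> bool \<Rightarrow> nat \<Rightarrow> bool" where
  "e10xy x y i = (if i = 2 then True else if i = 4 then False else if i = 3 then x else y)"

end

theory Submission
  imports Defs "HOL-Computational_Algebra.Formal_Power_Series"
begin

fun pp :: "nat \<Rightarrow> int" where
  "pp 0 = 1" | "pp (Suc 0) = 1" | "pp (Suc (Suc m)) = 2 * pp (Suc m)"

fun AE :: "nat \<Rightarrow> int \<times> int" where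
  "AE 0 = (1, 1)"
| "AE (Suc m) = ((\<Sum>k\<le>m. fst (AE k) * snd (AE (m - k))), (\<Sum>k\<le>m. fst (AE k) * pp (m - k)))"

definition AA where "AA n = fst (AE n)"
definition EE where "EE n = snd (AE n)"

lemma AA_0: "AA 0 = 1" and AA_Suc: "AA (Suc m) = (\<Sum>k\<le>m. AA k * EE (m - k))"
  and EE_0: "EE 0 = 1" and EE_Suc: "EE (Suc m) = (\<Sum>k\<le>m. AA k * pp (m - k))"
  by (simp_all add: AA_def EE_def)

lemma alg:
  fixes A E P X :: "'a::comm_ring_1"
  assumes e1: "A = 1 + X * A * E" and e2: "E = 1 + X * A * P" and e3: "(1 - (X + X)) * P = 1 - X"
  shows "(1 - X) * (A - (1 + X * A) * (1 + X * A)) = - X"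
proof -
  define H where "H = A - 1 - X * A"
  have h: "H = X * X * A * A * P"
  proof -
    have "H = X * A * (E - 1)" unfolding H_def using e1 by (simp add: algebra_simps)
    also have "\<dots> = X * X * A * A * P" using e2 by (simp add: algebra_simps)
    finally show ?thesis .
  qed
  have h2: "(1 - X) * (X * X * A * A) = (1 - (X + X)) * H"
  proof -
    have "(1 - (X + X)) * H = X * X * A * A * ((1 - (X + X)) * P)" unfolding h by (simp add: algebra_simps)
    also have "\<dots> = X * X * A * A * (1 - X)" by (simp only: e3)
    also have "\<dots> = (1 - X) * (X * X * A * A)" by (simp add: algebra_simps)
    finally show ?thesis by simp
  qed
  have "(1 - X) * (A - (1 + X * A) * (1 + X * A)) = (1 - X) * (H - X * A) - (1 - X) * (X * X * A * A)"
    unfolding H_def by (simp add: algebra_simps)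
  also have "\<dots> = (1 - X) * (H - X * A) - (1 - (X + X)) * H" using h2 by simp
  also have "\<dots> = X * H - X * A + X * X * A" by (simp add: algebra_simps)
  also have "\<dots> = - X" unfolding H_def by (simp add: algebra_simps)
  finally show ?thesis .
qed

lemma AA_eq:
  fixes a :: "nat \<Rightarrow> int"
  assumes "a 0 = 1" and "a 1 = 1"
    and "\<And>m. m \<ge> 1 \<Longrightarrow> a (m + 1) = -1 + (\<Sum>p=0..m. a p * a (m - p))"
  shows "AA n = a (n + 1)"
proof -
  define fA where "fA = Abs_fps AA"
  define fE where "fE = Abs_fps EE"
  define fP where "fP = Abs_fps pp"
  have e1: "fA = 1 + fps_X * fA * fE"
  proof (rule fps_ext)
    fix n
    have x: "fps_nth (fps_X * fA * fE) n = (if n = 0 then 0 else fps_nth (fA * fE) (n - 1))" by (simp add: mult.assoc)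
    show "fps_nth fA n = fps_nth (1 + fps_X * fA * fE) n"
      unfolding fps_add_nth x unfolding fps_mult_nth by (cases n) (simp_all add: fA_def fE_def AA_0 AA_Suc atLeast0AtMost)
  qed
  have e2: "fE = 1 + fps_X * fA * fP"
  proof (rule fps_ext)
    fix n
    have x: "fps_nth (fps_X * fA * fP) n = (if n = 0 then 0 else fps_nth (fA * fP) (n - 1))" by (simp add: mult.assoc)
    show "fps_nth fE n = fps_nth (1 + fps_X * fA * fP) n"
      unfolding fps_add_nth x unfolding fps_mult_nth by (cases n) (simp_all add: fA_def fE_def fP_def EE_0 EE_Suc atLeast0AtMost)
  qed
  have e3: "(1 - (fps_X + fps_X)) * fP = 1 - fps_X"
  proof (rule fps_ext)
    fix n
    have z: "(1 - (fps_X + fps_X)) * fP = fP - fps_X * fP - fps_X * fP" by (simp add: algebra_simps)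
    have x: "fps_nth (fps_X * fP) k = (if k = 0 then 0 else pp (k - 1))" for k by (simp add: fP_def)
    have y: "fps_nth (1 - fps_X :: int fps) k = (if k = 0 then 1 else if k = 1 then -1 else 0)" for k
      by (simp add: fps_X_def)
    have w: "fps_nth (fP - fps_X * fP - fps_X * fP) n = fps_nth (1 - fps_X :: int fps) n"
    proof (cases n)
      case 0 then show ?thesis unfolding fps_sub_nth x y by (simp add: fP_def)
    next
      case (Suc m) then show ?thesis unfolding fps_sub_nth x y by (cases m) (simp_all add: fP_def)
    qed
    show "fps_nth ((1 - (fps_X + fps_X)) * fP) n = fps_nth (1 - fps_X :: int fps) n" unfolding z using w by (simp only:)
  qed
  define fB where "fB = 1 + fps_X * fA"
  define G where "G = fA - fB * fB"
  have "(1 - fps_X) * G = - fps_X" unfolding G_def fB_def by (rule alg[OF e1 e2 e3])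
  hence g: "G - fps_X * G = - fps_X" by (simp add: algebra_simps)
  have G0: "fps_nth G 0 = 0" by (simp add: G_def fB_def fA_def AA_0)
  have GS: "fps_nth G (Suc m) = -1" for m
  proof (induction m)
    case 0
    have "fps_nth (G - fps_X * G) 1 = fps_nth (- fps_X :: int fps) 1" using g by simp
    then show ?case using G0 by simp
  next
    case (Suc m)
    have "fps_nth (G - fps_X * G) (Suc (Suc m)) = fps_nth (- fps_X :: int fps) (Suc (Suc m))" using g by simp
    then show ?case using Suc by simp
  qed
  have fBn: "fps_nth fB i = (if i = 0 then 1 else AA (i - 1))" for i
    by (cases i) (simp_all add: fB_def fA_def)
  show ?thesis
  proof (induction n rule: less_induct)
    case (less n)
    show ?case
    proof (cases n)
      case 0 then show ?thesis using assms(2) by (simp add: AA_0)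
    next
      case (Suc m)
      have ab: "a p = fps_nth fB p" if "p \<le> Suc m" for p
      proof (cases p)
        case 0 then show ?thesis using assms(1) fBn by simp
      next
        case (Suc q) then show ?thesis using less[of q] that \<open>n = Suc m\<close> fBn by simp
      qed
      have "a (n + 1) = -1 + (\<Sum>p=0..Suc m. a p * a (Suc m - p))"
        using assms(3)[of "Suc m"] Suc by simp
      also have "\<dots> = -1 + (\<Sum>p=0..Suc m. fps_nth fB p * fps_nth fB (Suc m - p))"
        by (intro arg_cong2[where f="(+)"] refl sum.cong) (simp_all add: ab)
      also have "\<dots> = -1 + fps_nth (fB * fB) (Suc m)" by (simp add: fps_mult_nth)
      also have "\<dots> = AA (Suc m)" using GS[of m] by (simp add: G_def fA_def)
      finally show ?thesis using Suc by simp
    qed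
  qed
qed


definition path :: "nat tree \<Rightarrow> bool" where
  "path t \<longleftrightarrow> (\<forall>l v r. Node l v r \<in> subtrees t \<longrightarrow> l = Leaf \<or> r = Leaf)"
definition good :: "nat tree \<Rightarrow> bool" where
  "good t \<longleftrightarrow> (\<forall>l u rl v rr. Node l u (Node rl v rr) \<in> subtrees t \<longrightarrow> path rr)"
definition goodE :: "nat tree \<Rightarrow> bool" where
  "goodE t \<longleftrightarrow> good t \<and> (case t of Leaf \<Rightarrow> True | Node _ _ rr \<Rightarrow> path rr)"

lemma path_Leaf[simp]: "path Leaf" by (simp add: path_def)
lemma path_Node: "path (Node l v r) \<longleftrightarrow> (l = Leaf \<or> r = Leaf) \<and> path l \<and> path r"
  unfolding path_def by (simp only: subtrees.simps Un_iff insert_iff singleton_iff) blast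
lemma good_Leaf[simp]: "good Leaf" by (simp add: good_def)
lemma good_Node: "good (Node l u r) \<longleftrightarrow> good l \<and> good r \<and> (case r of Leaf \<Rightarrow> True | Node _ _ rr \<Rightarrow> path rr)"
proof -
  have "good (Node l u r) \<longleftrightarrow> good l \<and> good r \<and>
    (\<forall>l' u' rl v rr. Node l' u' (Node rl v rr) = Node l u r \<longrightarrow> path rr)"
    unfolding good_def by (simp only: subtrees.simps Un_iff insert_iff singleton_iff) blast
  then show ?thesis by (cases r) auto
qed

lemma subtrees_trans: "s \<in> subtrees t \<Longrightarrow> subtrees s \<subseteq> subtrees t"
  by (induction t) auto

lemma set_subtrees: "s \<in> subtrees t \<Longrightarrow> set_tree s \<subseteq> set_tree t"
  by (induction t) auto

lemma path_good: "path t \<Longrightarrow> good t"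
  unfolding good_def path_def using subtrees_trans by fastforce

lemma goodE_Leaf[simp]: "goodE Leaf" by (simp add: goodE_def)
lemma path_right: "path t \<Longrightarrow> (case t of Leaf \<Rightarrow> True | Node _ _ c \<Rightarrow> path c)"
  by (cases t) (simp_all add: path_Node)

lemma goodE_Node: "goodE (Node rl v rr) \<longleftrightarrow> good rl \<and> path rr"
  using path_good path_right[of rr] by (auto simp: goodE_def good_Node)

lemma inorder_Nil_iff: "inorder t = [] \<longleftrightarrow> t = Leaf"
  by (cases t) auto

lemma decomp:
  assumes "length xs = Suc m"
  shows "{t. inorder t = xs \<and> S t} =
    (\<Union>k\<in>{..m}. (\<lambda>(l, r). Node l (xs ! k) r) `
       {(l, r). inorder l = take k xs \<and> inorder r = drop (Suc k) xs \<and> S (Node l (xs ! k) r)})"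
proof (intro equalityI subsetI)
  fix t assume "t \<in> {t. inorder t = xs \<and> S t}"
  then have t: "inorder t = xs" "S t" by auto
  then obtain l v r where tn: "t = Node l v r" using assms by (cases t) auto
  define k where "k = length (inorder l)"
  have xs: "xs = inorder l @ v # inorder r" using t tn by simp
  have "k \<le> m" using xs assms k_def by simp
  moreover have "take k xs = inorder l" "drop (Suc k) xs = inorder r" "xs ! k = v"
    using xs k_def by (auto simp: nth_append)
  ultimately show "t \<in> (\<Union>k\<in>{..m}. (\<lambda>(l, r). Node l (xs ! k) r) `
       {(l, r). inorder l = take k xs \<and> inorder r = drop (Suc k) xs \<and> S (Node l (xs ! k) r)})"
    using tn t by (auto intro!: bexI[where x=k] image_eqI[where x="(l, r)"])
next
  fix t assume "t \<in> (\<Union>k\<in>{..m}. (\<lambda>(l, r). Node l (xs ! k) r) `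
       {(l, r). inorder l = take k xs \<and> inorder r = drop (Suc k) xs \<and> S (Node l (xs ! k) r)})"
  then obtain k l r where k: "k \<le> m" "t = Node l (xs ! k) r" "inorder l = take k xs"
    "inorder r = drop (Suc k) xs" "S (Node l (xs ! k) r)" by auto
  have "k < length xs" using k assms by simp
  then have "inorder t = xs" using k by (simp add: id_take_nth_drop[symmetric])
  then show "t \<in> {t. inorder t = xs \<and> S t}" using k by simp
qed

lemma finite_trees: "finite {t. inorder t = xs}"
proof (induction "length xs" arbitrary: xs rule: less_induct)
  case less
  show ?case
  proof (cases "length xs")
    case 0 then show ?thesis by (simp add: inorder_Nil_iff)
  next
    case (Suc m)
    have "{t. inorder t = xs} = {t. inorder t = xs \<and> True}" by simp
    also have "\<dots> = (\<Union>k\<in>{..m}. (\<lambda>(l, r). Node l (xs ! k) r) `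
       {(l, r). inorder l = take k xs \<and> inorder r = drop (Suc k) xs \<and> True})"
      by (rule decomp[OF Suc])
    also have "finite \<dots>"
    proof (intro finite_UN_I finite_imageI)
      fix k assume "k \<in> {..m}"
      have "{(l, r). inorder l = take k xs \<and> inorder r = drop (Suc k) xs \<and> True} =
        {l. inorder l = take k xs} \<times> {r. inorder r = drop (Suc k) xs}" by auto
      moreover have "finite {l. inorder l = take k xs}" "finite {r. inorder r = drop (Suc k) xs}"
        using less Suc \<open>k \<in> {..m}\<close> by auto
      ultimately show "finite {(l, r). inorder l = take k xs \<and> inorder r = drop (Suc k) xs \<and> True}"
        by simp
    qed simp
    finally show ?thesis .
  qed
qed

lemma card_split:
  fixes f1 f2 :: "nat \<Rightarrow> int"
  assumes len: "length xs = Suc m"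
    and S: "\<And>l v r. size l + size r = m \<Longrightarrow> S (Node l v r) \<longleftrightarrow> SL l \<and> SR r \<and> C (size l)"
    and h1: "\<And>ys. length ys \<le> m \<Longrightarrow> int (card {t. inorder t = ys \<and> SL t}) = f1 (length ys)"
    and h2: "\<And>ys. length ys \<le> m \<Longrightarrow> int (card {t. inorder t = ys \<and> SR t}) = f2 (length ys)"
  shows "int (card {t. inorder t = xs \<and> S t}) = (\<Sum>k\<le>m. if C k then f1 k * f2 (m - k) else 0)"
proof -
  define B where "B k = {(l, r). inorder l = take k xs \<and> inorder r = drop (Suc k) xs \<and> S (Node l (xs ! k) r)}" for k
  have B: "B k = (if C k then {l. inorder l = take k xs \<and> SL l} \<times> {r. inorder r = drop (Suc k) xs \<and> SR r} else {})"
    if "k \<le> m" for k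
  proof -
    have "S (Node l (xs ! k) r) \<longleftrightarrow> SL l \<and> SR r \<and> C k"
      if "inorder l = take k xs" "inorder r = drop (Suc k) xs" for l r
    proof -
      have "size l = length (take k xs)" "size r = length (drop (Suc k) xs)"
        by (metis length_inorder that(1), metis length_inorder that(2))
      then have "size l = k" "size r = m - k" using \<open>k \<le> m\<close> len by simp_all
      then show ?thesis using S[of l r] \<open>k \<le> m\<close> by simp
    qed
    then show ?thesis unfolding B_def by auto
  qed
  have fin: "finite (B k)" for k
    unfolding B_def by (rule finite_subset[of _ "{l. inorder l = take k xs} \<times> {r. inorder r = drop (Suc k) xs}"])
      (auto simp: finite_trees)
  have "{t. inorder t = xs \<and> S t} = (\<Union>k\<in>{..m}. (\<lambda>(l, r). Node l (xs ! k) r) ` B k)"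
    unfolding B_def by (rule decomp[OF len])
  then have "card {t. inorder t = xs \<and> S t} = (\<Sum>k\<le>m. card ((\<lambda>(l, r). Node l (xs ! k) r) ` B k))"
  proof (simp only:, intro card_UN_disjoint)
    show "\<forall>i\<in>{..m}. \<forall>j\<in>{..m}. i \<noteq> j \<longrightarrow>
      (\<lambda>(l, r). Node l (xs ! i) r) ` B i \<inter> (\<lambda>(l, r). Node l (xs ! j) r) ` B j = {}"
    proof (intro ballI impI)
      fix i j assume "i \<in> {..m}" "j \<in> {..m}" "i \<noteq> j"
      have sz: "size l = i" if "(l, r) \<in> B i" "i \<le> m" for l r i
        using that len unfolding B_def by (auto simp flip: length_inorder)
      show "(\<lambda>(l, r). Node l (xs ! i) r) ` B i \<inter> (\<lambda>(l, r). Node l (xs ! j) r) ` B j = {}"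
      proof (rule ccontr)
        assume "(\<lambda>(l, r). Node l (xs ! i) r) ` B i \<inter> (\<lambda>(l, r). Node l (xs ! j) r) ` B j \<noteq> {}"
        then obtain l r l' r' where "(l, r) \<in> B i" "(l', r') \<in> B j" "Node l (xs ! i) r = Node l' (xs ! j) r'"
          by fast
        then show False using sz[of l r i] sz[of l' r' j] \<open>i \<in> {..m}\<close> \<open>j \<in> {..m}\<close> \<open>i \<noteq> j\<close> by simp
      qed
    qed
  qed (auto simp: fin)
  also have "\<dots> = (\<Sum>k\<le>m. card (B k))"
    by (intro sum.cong refl card_image) (auto simp: inj_on_def)
  finally have "int (card {t. inorder t = xs \<and> S t}) = (\<Sum>k\<le>m. int (card (B k)))" by simp
  also have "\<dots> = (\<Sum>k\<le>m. if C k then f1 k * f2 (m - k) else 0)"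
  proof (intro sum.cong refl)
    fix k assume k: "k \<in> {..m}"
    have "int (card {l. inorder l = take k xs \<and> SL l}) = f1 k"
      using h1[of "take k xs"] k len by simp
    moreover have "int (card {r. inorder r = drop (Suc k) xs \<and> SR r}) = f2 (m - k)"
      using h2[of "drop (Suc k) xs"] k len by simp
    ultimately show "int (card (B k)) = (if C k then f1 k * f2 (m - k) else 0)"
      using B[of k] k by (simp add: card_cartesian_product)
  qed
  finally show ?thesis .
qed


lemma sum_ends:
  fixes g :: "nat \<Rightarrow> int"
  shows "(\<Sum>k\<le>Suc j. if k = 0 \<or> k = Suc j then g k else 0) = g 0 + g (Suc j)"
proof -
  have "(\<Sum>k\<le>Suc j. if k = 0 \<or> k = Suc j then g k else 0) =
     g 0 + (\<Sum>i\<le>j. if Suc i = Suc j then g (Suc i) else 0)"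
    by (subst sum.atMost_Suc_shift) simp
  also have "(\<Sum>i\<le>j. if Suc i = Suc j then g (Suc i) else 0) = (\<Sum>i\<le>j. if i = j then g (Suc i) else 0)"
    by simp
  also have "\<dots> = g (Suc j)" by simp
  finally show ?thesis .
qed

lemma count_path: "int (card {t. inorder t = xs \<and> path t}) = pp (length xs)"
proof (induction "length xs" arbitrary: xs rule: less_induct)
  case less
  show ?case
  proof (cases "length xs")
    case 0
    then have "{t. inorder t = xs \<and> path t} = {Leaf}" by (auto simp: inorder_Nil_iff)
    then show ?thesis using 0 by simp
  next
    case (Suc m)
    have "int (card {t. inorder t = xs \<and> path t}) =
      (\<Sum>k\<le>m. if k = 0 \<or> k = m then pp k * pp (m - k) else 0)"
    proof (rule card_split[where SL=path and SR=path and C="\<lambda>k. k = 0 \<or> k = m", OF Suc])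
      fix l r :: "nat tree" and v :: nat assume "size l + size r = m"
      then show "path (Node l v r) \<longleftrightarrow> path l \<and> path r \<and> (size l = 0 \<or> size l = m)"
        by (auto simp: path_Node)
    qed (use less Suc in auto)
    also have "\<dots> = pp (Suc m)"
    proof (cases m)
      case 0 then show ?thesis by simp
    next
      case (Suc j)
      have "(\<Sum>k\<le>m. if k = 0 \<or> k = m then pp k * pp (m - k) else 0) = pp 0 * pp m + pp m * pp 0"
        unfolding Suc using sum_ends[where g="\<lambda>k. pp k * pp (Suc j - k)"] by simp
      then show ?thesis using Suc by simp
    qed
    finally show ?thesis using Suc by simp
  qed
qed

lemma count_good: "int (card {t. inorder t = xs \<and> good t}) = AA (length xs) \<and>
   int (card {t. inorder t = xs \<and> goodE t}) = EE (length xs)"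
proof (induction "length xs" arbitrary: xs rule: less_induct)
  case less
  show ?case
  proof (cases "length xs")
    case 0
    then have "{t. inorder t = xs \<and> good t} = {Leaf}" "{t. inorder t = xs \<and> goodE t} = {Leaf}"
      by (auto simp: inorder_Nil_iff)
    then show ?thesis using 0 by (simp add: AA_0 EE_0)
  next
    case (Suc m)
    have "int (card {t. inorder t = xs \<and> good t}) =
      (\<Sum>k\<le>m. if True then AA k * EE (m - k) else 0)"
    proof (rule card_split[where SL=good and SR=goodE and C="\<lambda>k. True", OF Suc])
      fix l r :: "nat tree" and v :: nat
      show "good (Node l v r) \<longleftrightarrow> good l \<and> goodE r \<and> True"
        using path_good path_right by (cases r) (auto simp: good_Node goodE_Node)
    qed (use less Suc in auto)
    moreover have "int (card {t. inorder t = xs \<and> goodE t}) =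
      (\<Sum>k\<le>m. if True then AA k * pp (m - k) else 0)"
    proof (rule card_split[where SL=good and SR=path and C="\<lambda>k. True", OF Suc])
      fix l r :: "nat tree" and v :: nat
      show "goodE (Node l v r) \<longleftrightarrow> good l \<and> path r \<and> True"
        by (simp add: goodE_Node)
    qed (use less Suc count_path in auto)
    ultimately show ?thesis using Suc by (simp add: AA_Suc EE_Suc)
  qed
qed


lemma distinct_sub: "s \<in> subtrees t \<Longrightarrow> distinct (inorder t) \<Longrightarrow> distinct (inorder s)"
  by (induction t) auto

lemma uniq_sub:
  "distinct (inorder t) \<Longrightarrow> Node l1 a r1 \<in> subtrees t \<Longrightarrow> Node l2 a r2 \<in> subtrees t \<Longrightarrow> l1 = l2 \<and> r1 = r2"
proof (induction t)
  case Leaf then show ?case by simp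
next
  case (Node l b r)
  have d: "distinct (inorder l)" "distinct (inorder r)" "b \<notin> set_tree l" "b \<notin> set_tree r"
    "set_tree l \<inter> set_tree r = {}" using Node.prems(1) by auto
  have m1: "a \<in> set_tree l" if "Node x a y \<in> subtrees l" for x y using that in_set_tree_if by metis
  have m2: "a \<in> set_tree r" if "Node x a y \<in> subtrees r" for x y using that in_set_tree_if by metis
  have A: "Node l1 a r1 = Node l b r \<or> Node l1 a r1 \<in> subtrees l \<or> Node l1 a r1 \<in> subtrees r"
    using Node.prems(2) by simp
  have B: "Node l2 a r2 = Node l b r \<or> Node l2 a r2 \<in> subtrees l \<or> Node l2 a r2 \<in> subtrees r"
    using Node.prems(3) by simp
  show ?case
  proof (cases "a = b")
    case True
    then have "Node l1 a r1 \<notin> subtrees l" "Node l1 a r1 \<notin> subtrees r"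
      "Node l2 a r2 \<notin> subtrees l" "Node l2 a r2 \<notin> subtrees r" using d by simp_all
    then show ?thesis using A B by simp
  next
    case False
    then have "Node l1 a r1 \<noteq> Node l b r" "Node l2 a r2 \<noteq> Node l b r" by simp_all
    show ?thesis
    proof (cases "a \<in> set_tree l")
      case True
      then have "a \<notin> set_tree r" using d(5) by blast
      then have "Node l1 a r1 \<in> subtrees l" "Node l2 a r2 \<in> subtrees l"
        using A B \<open>Node l1 a r1 \<noteq> Node l b r\<close> \<open>Node l2 a r2 \<noteq> Node l b r\<close> m2 by blast+
      then show ?thesis using Node.IH(1) d(1) by blast
    next
      case False
      then have "Node l1 a r1 \<in> subtrees r" "Node l2 a r2 \<in> subtrees r"
        using A B \<open>Node l1 a r1 \<noteq> Node l b r\<close> \<open>Node l2 a r2 \<noteq> Node l b r\<close> m1 by blast+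
      then show ?thesis using Node.IH(2) d(2) by blast
    qed
  qed
qed

lemma value_in: "t \<noteq> Leaf \<Longrightarrow> value t \<in> set_tree t"
  by (cases t) auto

lemma set_P: "set_tree P12435 = {1,2,3,4,5}"
  by (auto simp: P12435_def)

lemma subP: "subtrees P12435 = {P12435, Node Leaf 2 (Node (Node Leaf 3 Leaf) 4 (Node Leaf 5 Leaf)),
   Node (Node Leaf 3 Leaf) 4 (Node Leaf 5 Leaf), Node Leaf 3 Leaf, Node Leaf 5 Leaf, Leaf}"
  unfolding P12435_def by auto
lemma lchild_P: "lchild P12435 v i \<longleftrightarrow> v = 4 \<and> i = 3"
proof
  show "lchild P12435 v i \<Longrightarrow> v = 4 \<and> i = 3"
    unfolding lchild_def subP unfolding P12435_def by auto
  show "v = 4 \<and> i = 3 \<Longrightarrow> lchild P12435 v i"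
    unfolding lchild_def subP
    by (intro exI[of _ "Node Leaf 3 Leaf"] exI[of _ "Node Leaf 5 Leaf"]) simp
qed
lemma rchild_P: "rchild P12435 v i \<longleftrightarrow> (v = 1 \<and> i = 2) \<or> (v = 2 \<and> i = 4) \<or> (v = 4 \<and> i = 5)"
proof
  show "rchild P12435 v i \<Longrightarrow> (v = 1 \<and> i = 2) \<or> (v = 2 \<and> i = 4) \<or> (v = 4 \<and> i = 5)"
    unfolding rchild_def subP unfolding P12435_def by auto
  assume "(v = 1 \<and> i = 2) \<or> (v = 2 \<and> i = 4) \<or> (v = 4 \<and> i = 5)"
  then show "rchild P12435 v i"
  proof (elim disjE conjE)
    assume "v = 1" "i = 2" then show ?thesis unfolding rchild_def subP P12435_def
      by (intro exI[of _ Leaf] exI[of _ "Node Leaf 2 (Node (Node Leaf 3 Leaf) 4 (Node Leaf 5 Leaf))"]) simp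
  next
    assume "v = 2" "i = 4" then show ?thesis unfolding rchild_def subP P12435_def
      by (intro exI[of _ Leaf] exI[of _ "Node (Node Leaf 3 Leaf) 4 (Node Leaf 5 Leaf)"]) simp
  next
    assume "v = 4" "i = 5" then show ?thesis unfolding rchild_def subP P12435_def
      by (intro exI[of _ "Node Leaf 3 Leaf"] exI[of _ "Node Leaf 5 Leaf"]) simp
  qed
qed

lemma contains_imp: 
  assumes d: "distinct (inorder T)" and c: "contains T P12435 (e10xy x y)"
  shows "\<not> good T"
proof
  assume g: "good T"
  from c obtain f where
    hl: "\<forall>v i. lchild P12435 v i \<longrightarrow> (if e10xy x y i then lchild T (f v) (f i) else in_lsub T (f v) (f i))" and
    hr: "\<forall>v i. rchild P12435 v i \<longrightarrow> (if e10xy x y i then rchild T (f v) (f i) else in_rsub T (f v) (f i))"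
    unfolding contains_def by blast
  have "rchild T (f 1) (f 2)" using hr[rule_format, of 1 2] by (simp add: rchild_P e10xy_def)
  then obtain l1 r1 where n1: "Node l1 (f 1) r1 \<in> subtrees T" "r1 \<noteq> Leaf" "value r1 = f 2"
    unfolding rchild_def by blast
  then obtain rl rr where r1: "r1 = Node rl (f 2) rr" by (cases r1) auto
  have n1': "Node l1 (f 1) (Node rl (f 2) rr) \<in> subtrees T" using n1(1) r1 by simp
  have "subtrees (Node l1 (f 1) (Node rl (f 2) rr)) \<subseteq> subtrees T" by (rule subtrees_trans[OF n1'])
  then have n2: "Node rl (f 2) rr \<in> subtrees T" and srr: "subtrees rr \<subseteq> subtrees T" by auto
  have "in_rsub T (f 2) (f 4)" using hr[rule_format, of 2 4] by (simp add: rchild_P e10xy_def)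
  then obtain l' r' where nn: "Node l' (f 2) r' \<in> subtrees T" "f 4 \<in> set_tree r'"
    unfolding in_rsub_def by blast
  have "r' = rr" using uniq_sub[OF d nn(1) n2] by simp
  then have f4: "f 4 \<in> set_tree rr" using nn(2) by simp
  have ne: "z \<in> set_tree t \<Longrightarrow> t \<noteq> Leaf" for z t by auto
  have "if e10xy x y 3 then lchild T (f 4) (f 3) else in_lsub T (f 4) (f 3)" using hl[rule_format, of 4 3] by (simp add: lchild_P)
  then have "lchild T (f 4) (f 3) \<or> in_lsub T (f 4) (f 3)" by (cases "e10xy x y 3") simp_all
  then have "\<exists>a b. Node a (f 4) b \<in> subtrees T \<and> a \<noteq> Leaf"
  proof
    assume "lchild T (f 4) (f 3)"
    then obtain l r where "Node l (f 4) r \<in> subtrees T" "l \<noteq> Leaf" unfolding lchild_def by blast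
    then show ?thesis by blast
  next
    assume "in_lsub T (f 4) (f 3)"
    then obtain l r where "Node l (f 4) r \<in> subtrees T" "f 3 \<in> set_tree l" unfolding in_lsub_def by blast
    moreover then have "l \<noteq> Leaf" by auto
    ultimately show ?thesis by blast
  qed
  then obtain a b where ab: "Node a (f 4) b \<in> subtrees T" "a \<noteq> Leaf" by blast
  have "if e10xy x y 5 then rchild T (f 4) (f 5) else in_rsub T (f 4) (f 5)" using hr[rule_format, of 4 5] by (simp add: rchild_P)
  then have "rchild T (f 4) (f 5) \<or> in_rsub T (f 4) (f 5)" by (cases "e10xy x y 5") simp_all
  then have "\<exists>c dd. Node c (f 4) dd \<in> subtrees T \<and> dd \<noteq> Leaf"
  proof
    assume "rchild T (f 4) (f 5)"
    then obtain l r where "Node l (f 4) r \<in> subtrees T" "r \<noteq> Leaf" unfolding rchild_def by blast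
    then show ?thesis by blast
  next
    assume "in_rsub T (f 4) (f 5)"
    then obtain l r where "Node l (f 4) r \<in> subtrees T" "f 5 \<in> set_tree r" unfolding in_rsub_def by blast
    moreover then have "r \<noteq> Leaf" by auto
    ultimately show ?thesis by blast
  qed
  then obtain c dd where cd: "Node c (f 4) dd \<in> subtrees T" "dd \<noteq> Leaf" by blast
  have "b = dd" using uniq_sub[OF d ab(1) cd(1)] by simp
  obtain a' b' where ab': "Node a' (f 4) b' \<in> subtrees rr" using set_treeE[OF f4] by blast
  have "Node a' (f 4) b' \<in> subtrees T" using ab' srr by blast
  then have "a' = a \<and> b' = b" using uniq_sub[OF d _ ab(1)] by blast
  then have sub: "Node a (f 4) dd \<in> subtrees rr" using ab' \<open>b = dd\<close> by simp
  have "path rr" using g n1' unfolding good_def by blast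
  then have "a = Leaf \<or> dd = Leaf" using sub unfolding path_def by blast
  then show False using ab(2) cd(2) by blast
qed

lemma imp_contains:
  assumes d: "distinct (inorder T)" and ng: "\<not> good T"
  shows "contains T P12435 (e10xy x y)"
proof -
  obtain l u rl v rr where s1: "Node l u (Node rl v rr) \<in> subtrees T" and np: "\<not> path rr"
    using ng unfolding good_def by blast
  obtain wl w wr where s3: "Node wl w wr \<in> subtrees rr" "wl \<noteq> Leaf" "wr \<noteq> Leaf"
    using np unfolding path_def by blast
  have sub2: "subtrees (Node l u (Node rl v rr)) \<subseteq> subtrees T" using s1 subtrees_trans by blast
  have s2: "Node rl v rr \<in> subtrees T" using sub2 by auto
  have sub3: "subtrees rr \<subseteq> subtrees T" using sub2 by auto
  have s3T: "Node wl w wr \<in> subtrees T" using s3 sub3 by auto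
  have d1: "distinct (inorder (Node l u (Node rl v rr)))" using distinct_sub[OF s1 d] .
  have d3: "distinct (inorder (Node wl w wr))" using distinct_sub[OF s3T d] .
  have sw: "set_tree (Node wl w wr) \<subseteq> set_tree rr" using set_subtrees[OF s3(1)] .
  define p where "p = value wl"
  define q where "q = value wr"
  have p: "p \<in> set_tree wl" using value_in[OF s3(2)] p_def by simp
  have q: "q \<in> set_tree wr" using value_in[OF s3(3)] q_def by simp
  have A1: "u \<notin> set_tree (Node rl v rr)" and A2: "v \<notin> set_tree rr" using d1 by simp_all
  have A3: "w \<notin> set_tree wl" "w \<notin> set_tree wr" "set_tree wl \<inter> set_tree wr = {}" using d3 by simp_all
  have W: "w \<in> set_tree rr" "p \<in> set_tree rr" "q \<in> set_tree rr" using sw p q by auto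
  have dd: "u \<noteq> v" "u \<noteq> w" "u \<noteq> p" "u \<noteq> q" "v \<noteq> w" "v \<noteq> p" "v \<noteq> q" "w \<noteq> p" "w \<noteq> q" "p \<noteq> q"
    using A1 A2 A3 W p q by auto
  define f where "f i = (if i = 1 then u else if i = 2 then v else if i = 3 then p else if i = 4 then w else q)" for i :: nat
  show ?thesis unfolding contains_def
  proof (intro exI[of _ f] conjI allI impI)
    show "inj_on f (set_tree P12435)" unfolding set_P inj_on_def f_def using dd by auto
    show "f ` set_tree P12435 \<subseteq> set_tree T"
      using set_subtrees[OF s1] sw p q unfolding set_P f_def by auto
  next
    fix a i assume "lchild P12435 a i"
    then have "a = 4" "i = 3" using lchild_P by auto
    moreover have "lchild T w p" unfolding lchild_def p_def using s3T s3(2) by blast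
    moreover have "in_lsub T w p" unfolding in_lsub_def using s3T p by blast
    ultimately show "if e10xy x y i then lchild T (f a) (f i) else in_lsub T (f a) (f i)"
      by (simp add: f_def)
  next
    fix a i assume "rchild P12435 a i"
    then have "(a = 1 \<and> i = 2) \<or> (a = 2 \<and> i = 4) \<or> (a = 4 \<and> i = 5)" using rchild_P by auto
    moreover have "rchild T u v" unfolding rchild_def using s1 by fastforce
    moreover have "in_rsub T v w" unfolding in_rsub_def using s2 sw by auto
    moreover have "rchild T w q" unfolding rchild_def q_def using s3T s3(3) by blast
    moreover have "in_rsub T w q" unfolding in_rsub_def using s3T q by blast
    ultimately show "if e10xy x y i then rchild T (f a) (f i) else in_rsub T (f a) (f i)"
      by (elim disjE conjE) (simp_all add: f_def e10xy_def)
  qed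
qed


theorem lemma23:
  fixes a :: "nat \<Rightarrow> int" and x y :: bool and n :: nat
  assumes "a 0 = 1" and "a 1 = 1"
    and "\<And>m. m \<ge> 1 \<Longrightarrow> a (m + 1) = -1 + (\<Sum>p=0..m. a p * a (m - p))"
  shows "int (card (avoiders n P12435 (e10xy x y))) = a (n + 1)"
proof -
  have "avoiders n P12435 (e10xy x y) = {t. inorder t = [1..<n+1] \<and> good t}"
  proof (intro set_eqI iffI)
    fix t assume "t \<in> avoiders n P12435 (e10xy x y)"
    then have t: "inorder t = [1..<n+1]" "\<not> contains t P12435 (e10xy x y)"
      unfolding avoiders_def BT_def by auto
    then have "distinct (inorder t)" by simp
    then have "good t" using t(2) imp_contains[of t x y] by blast
    then show "t \<in> {t. inorder t = [1..<n+1] \<and> good t}" using t by simp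
  next
    fix t assume "t \<in> {t. inorder t = [1..<n+1] \<and> good t}"
    then have t: "inorder t = [1..<n+1]" "good t" by auto
    then have "distinct (inorder t)" by simp
    then have "\<not> contains t P12435 (e10xy x y)" using t(2) contains_imp by blast
    then show "t \<in> avoiders n P12435 (e10xy x y)" using t unfolding avoiders_def BT_def by simp
  qed
  moreover have len: "length [1..<n+1] = n" by simp
  ultimately have "int (card (avoiders n P12435 (e10xy x y))) = AA n"
    using count_good[of "[1..<n+1]", THEN conjunct1] by (simp only:)
  also have "\<dots> = a (n + 1)" by (rule AA_eq[OF assms])
  finally show ?thesis .
qed

end
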